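(* Let $Y=X\beta+\epsilon$ with $Y\in\mathbb{R}^n$ and $X$ an $n\times d$ matrix. Let $B=\bigcup_{j=1}^J B_j\subset\mathbb{R}^d$ be a finite disjoint union, where each $B_j$ is a manifold, possibly with boundary or corner, and let $p:B\to\mathbb{R}$ be a (deterministic) penalty that is continuous on each $B_j$. Let $Q(\beta,Y,X)=\tfrac12\|Y-X\beta\|^2+p(\beta)$. If $X$ has full rank $d$ and the distribution of $Y$ conditional on $X$ is absolutely continuous, then the argmin of $Q(\beta,Y,X)$ over $\beta\in B$ is unique almost surely.
   Context: A manifold with boundary or corner of dimension $m$ is a (second-countable Hausdorff) space in which every point has a neighborhood diffeomorphic, via a continuously differentiable map with continuously differentiable inverse, to a relatively open subset of $[0,\infty)^m$. "Unique" means the argmin contains at most one point. *)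

theory Defs
  imports "HOL-Probability.Probability"
begin

definition C1_on :: "('a::real_normed_vector) set \<Rightarrow> ('a \<Rightarrow> 'b::real_normed_vector) \<Rightarrow> bool" where
  "C1_on S f \<longleftrightarrow>
     (\<forall>x\<in>S. \<exists>W g g'. open W \<and> x \<in> W \<and> (\<forall>y\<in>S \<inter> W. g y = f y) \<and>
        (\<forall>y\<in>W. (g has_derivative blinfun_apply (g' y)) (at y)) \<and> continuous_on W g')"

definition C1_diffeo :: "('a::real_normed_vector) set \<Rightarrow> ('b::real_normed_vector) set \<Rightarrow> ('a \<Rightarrow> 'b) \<Rightarrow> bool" where
  "C1_diffeo S T f \<longleftrightarrow> bij_betw f S T \<and> C1_on S f \<and> C1_on T (inv_into S f)"

text \<open>Model corner [0,\<infinity>)^m, m = card K, realised inside real^'d on the coordinates K.\<close>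
definition orthant :: "'d::finite set \<Rightarrow> (real^'d) set" where
  "orthant K = {x. \<forall>i. 0 \<le> x $ i \<and> (i \<notin> K \<longrightarrow> x $ i = 0)}"

definition manifold_with_corners :: "(real^'d::finite) set \<Rightarrow> bool" where
  "manifold_with_corners S \<longleftrightarrow>
     (\<exists>K::'d set. \<forall>x\<in>S. \<exists>U V \<phi>. openin (top_of_set S) U \<and> x \<in> U \<and>
         openin (top_of_set (orthant K)) V \<and> C1_diffeo U V \<phi>)"

definition Qobj :: "real^'d^'n \<Rightarrow> (real^'d \<Rightarrow> real) \<Rightarrow> real^'n \<Rightarrow> real^'d \<Rightarrow> real" where
  "Qobj X p y \<beta> = (1/2) * (norm (y - X *v \<beta>))^2 + p \<beta>"

definition argmin_set :: "(real^'d \<Rightarrow> real) \<Rightarrow> (real^'d) set \<Rightarrow> (real^'d) set" where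
  "argmin_set f B = {\<beta>\<in>B. \<forall>\<gamma>\<in>B. f \<beta> \<le> f \<gamma>}"

end

theory Submission
  imports Defs
begin

definition projc :: "'n::finite \<Rightarrow> real^'n \<Rightarrow> real^'n" where
  "projc i y = y - (y $ i) *\<^sub>R axis i 1"

lemma projc_decomp: "y = projc i y + (y $ i) *\<^sub>R axis i 1"
  by (simp add: projc_def)

lemma negligible_graph:
  fixes A :: "(real^'n::finite) set" and i :: 'n and c :: real
  assumes lip: "\<And>y y'. y \<in> A \<Longrightarrow> y' \<in> A \<Longrightarrow> \<bar>y $ i - y' $ i\<bar> \<le> c * norm (projc i y - projc i y')"
  shows "negligible A"
proof -
  have hp: "projc i ` A \<subseteq> {x. axis i 1 \<bullet> x = 0}"
    by (auto simp: projc_def inner_axis' inner_diff_right)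
  have "axis i (1::real) \<noteq> 0" by (simp add: axis_eq_0_iff)
  then have neg0: "negligible (projc i ` A)"
    using negligible_subset[OF negligible_hyperplane hp] by auto
  have inj: "inj_on (projc i) A"
  proof (rule inj_onI)
    fix y y' assume y: "y \<in> A" "y' \<in> A" "projc i y = projc i y'"
    then have "\<bar>y $ i - y' $ i\<bar> \<le> 0" using lip[OF y(1,2)] by simp
    then have "y $ i = y' $ i" by simp
    then show "y = y'" using projc_decomp[of y i] projc_decomp[of y' i] y(3) by metis
  qed
  define f where "f = inv_into A (projc i)"
  have fA: "f ` (projc i ` A) = A"
    unfolding f_def using inj by (simp add: image_comp)
  have "negligible (f ` (projc i ` A))"
  proof (rule negligible_locally_Lipschitz_image[OF order_refl neg0])
    fix x assume "x \<in> projc i ` A"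
    then obtain y where y: "y \<in> A" "x = projc i y" by auto
    show "\<exists>T B. open T \<and> x \<in> T \<and> (\<forall>z\<in>projc i ` A \<inter> T. norm (f z - f x) \<le> B * norm (z - x))"
    proof (intro exI[of _ UNIV] exI[of _ "1 + c"] conjI ballI)
      fix z assume "z \<in> projc i ` A \<inter> UNIV"
      then obtain y' where y': "y' \<in> A" "z = projc i y'" by auto
      have fx: "f x = y" "f z = y'" using y y' inj by (auto simp: f_def)
      have "y' - y = (projc i y' - projc i y) + (y' $ i - y $ i) *\<^sub>R axis i 1"
        using projc_decomp[of y i] projc_decomp[of y' i]
        by (metis (no_types, lifting) add_diff_add scaleR_left_diff_distrib)
      then have "norm (y' - y) \<le> norm (projc i y' - projc i y) + \<bar>y' $ i - y $ i\<bar>"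
        by (metis norm_axis_1 norm_scaleR norm_triangle_ineq real_norm_def mult.right_neutral)
      also have "\<dots> \<le> (1 + c) * norm (projc i y' - projc i y)"
        using lip[OF y' (1) y(1)] by (simp add: algebra_simps)
      finally show "norm (f z - f x) \<le> (1 + c) * norm (z - x)" using fx y y' by simp
    qed auto
  qed
  then show ?thesis using fA by simp
qed


definition Mset :: "real^'d^'n \<Rightarrow> (real^'d \<Rightarrow> real) \<Rightarrow> (real^'d) set \<Rightarrow> real^'n \<Rightarrow> (real^'n) set" where
  "Mset X p B y = {X *v \<beta> | \<beta>. \<beta> \<in> argmin_set (Qobj X p y) B}"

lemma Mset_mono:
  assumes "u \<in> Mset X p B y" "u' \<in> Mset X p B y'"
  shows "0 \<le> (u - u') \<bullet> (y - y')"
proof -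
  obtain b where b: "u = X *v b" "b \<in> argmin_set (Qobj X p y) B" using assms(1) by (auto simp: Mset_def)
  obtain b' where b': "u' = X *v b'" "b' \<in> argmin_set (Qobj X p y') B" using assms(2) by (auto simp: Mset_def)
  have 1: "(1/2) * (norm (y - u))^2 + p b \<le> (1/2) * (norm (y - u'))^2 + p b'"
    using b b' by (auto simp: argmin_set_def Qobj_def)
  have 2: "(1/2) * (norm (y' - u'))^2 + p b' \<le> (1/2) * (norm (y' - u))^2 + p b"
    using b b' by (auto simp: argmin_set_def Qobj_def)
  have e: "(norm (a - c))^2 = a \<bullet> a - 2 * (a \<bullet> c) + c \<bullet> c" for a c :: "real^'n"
    by (simp add: power2_norm_eq_inner inner_diff_left inner_diff_right inner_commute)
  have "(u - u') \<bullet> (y - y') = y \<bullet> u - y \<bullet> u' - y' \<bullet> u + y' \<bullet> u'"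
    by (simp add: inner_diff_left inner_diff_right inner_commute)
  moreover have "y \<bullet> u - y \<bullet> u' - y' \<bullet> u + y' \<bullet> u' \<ge> 0"
    using 1 2 unfolding e by argo
  ultimately show ?thesis by simp
qed

definition Aset :: "real^'d^'n \<Rightarrow> (real^'d \<Rightarrow> real) \<Rightarrow> (real^'d) set \<Rightarrow> 'n \<times> int \<times> nat \<Rightarrow> (real^'n) set" where
  "Aset X p B = (\<lambda>(i, m, k). {y. \<exists>u1\<in>Mset X p B y. \<exists>u2\<in>Mset X p B y.
       u1 $ i < m / (real k+1) \<and> (m+1) / (real k+1) < u2 $ i \<and> norm u1 \<le> k \<and> norm u2 \<le> k})"

lemma Aset_negligible:
  fixes X :: "real^'d^'n" shows "negligible (Aset X p B (i, m, k))"
proof (rule negligible_graph[where i = i and c = "2 * k * (real k+1)"])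
  fix y y' assume y: "y \<in> Aset X p B (i, m, k)" and y': "y' \<in> Aset X p B (i, m, k)"
  obtain u1 u2 where u: "u1 \<in> Mset X p B y" "u2 \<in> Mset X p B y" "u1 $ i < m / (real k+1)"
    "(m+1) / (real k+1) < u2 $ i" "norm u1 \<le> k" "norm u2 \<le> k" proof -
    have "\<exists>u1\<in>Mset X p B y. \<exists>u2\<in>Mset X p B y. u1 $ i < m / (real k+1) \<and> (m+1) / (real k+1) < u2 $ i \<and> norm u1 \<le> k \<and> norm u2 \<le> k"
      using y unfolding Aset_def by simp
    then show ?thesis using that by blast
  qed
  obtain v1 v2 where v: "v1 \<in> Mset X p B y'" "v2 \<in> Mset X p B y'" "v1 $ i < m / (real k+1)"
    "(m+1) / (real k+1) < v2 $ i" "norm v1 \<le> k" "norm v2 \<le> k" proof -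
    have "\<exists>u1\<in>Mset X p B y'. \<exists>u2\<in>Mset X p B y'. u1 $ i < m / (real k+1) \<and> (m+1) / (real k+1) < u2 $ i \<and> norm u1 \<le> k \<and> norm u2 \<le> k"
      using y' unfolding Aset_def by simp
    then show ?thesis using that by blast
  qed
  define dw where "dw = projc i y - projc i y'"
  define dt where "dt = y $ i - y' $ i"
  have yd: "y - y' = dw + dt *\<^sub>R axis i 1"
    using projc_decomp[of y i] projc_decomp[of y' i] unfolding dw_def dt_def
    by (metis (no_types, lifting) add_diff_add scaleR_left_diff_distrib)
  have ip: "(a - b) \<bullet> (y - y') = (a - b) \<bullet> dw + (a $ i - b $ i) * dt" for a b
    unfolding yd by (simp add: inner_add_right inner_axis)
  have cs: "(a - b) \<bullet> dw \<le> 2 * k * norm dw" if "norm a \<le> k" "norm b \<le> k" for a b :: "real^'n"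
  proof -
    have "(a - b) \<bullet> dw \<le> norm (a - b) * norm dw" by (rule Cauchy_Schwarz_ineq2[THEN order_trans[OF abs_ge_self]])
    also have "\<dots> \<le> 2 * k * norm dw"
      using norm_triangle_ineq4[of a b] that by (intro mult_right_mono) auto
    finally show ?thesis .
  qed
  have kp: "(0::real) < k + 1" by simp
  have gap1: "1 / (real k+1) < v2 $ i - u1 $ i" and gap2: "1 / (real k+1) < u2 $ i - v1 $ i"
    using u v kp by (auto simp: add_divide_distrib diff_divide_distrib)
  have "\<bar>dt\<bar> \<le> 2 * k * (real k+1) * norm dw"
  proof (cases "dt \<ge> 0")
    case True
    have "0 \<le> (u1 - v2) \<bullet> dw + (u1 $ i - v2 $ i) * dt" using Mset_mono[OF u(1) v(2)] ip by simp
    moreover have "(1 / (real k+1)) * dt \<le> (v2 $ i - u1 $ i) * dt" using gap1 True by (intro mult_right_mono) auto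
    ultimately have "dt / (real k+1) \<le> 2 * k * norm dw" using cs[OF u(5) v(6)] by (simp add: algebra_simps)
    then have "dt \<le> 2 * k * norm dw * (real k+1)" using kp by (simp add: divide_le_eq)
    then show ?thesis using True by (simp add: algebra_simps)
  next
    case False
    have "0 \<le> (u2 - v1) \<bullet> dw + (u2 $ i - v1 $ i) * dt" using Mset_mono[OF u(2) v(1)] ip by simp
    moreover have "(u2 $ i - v1 $ i) * dt \<le> (1 / (real k+1)) * dt" using gap2 False by (intro mult_right_mono_neg) auto
    moreover have "(u2 - v1) \<bullet> dw \<le> 2 * k * norm dw" using cs[OF u(6) v(5)] .
    ultimately have "- dt / (real k+1) \<le> 2 * k * norm dw" by (simp add: algebra_simps)
    then have "(- dt) / (real k+1) \<le> 2 * k * norm dw" by simp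
    then have "- dt \<le> 2 * k * norm dw * (real k+1)" using kp by (simp only: divide_le_eq)
    then show ?thesis using False by (simp add: algebra_simps)
  qed
  then show "\<bar>y $ i - y' $ i\<bar> \<le> 2 * k * (real k+1) * norm (projc i y - projc i y')"
    by (simp add: dt_def dw_def)
qed

lemma cover_aux:
  fixes X :: "real^'d^'n"
  assumes "u1 \<in> Mset X p B y" "u2 \<in> Mset X p B y" "u1 $ i < u2 $ i"
  shows "\<exists>m k. y \<in> Aset X p B (i, m, k)"
proof -
  define \<delta> where "\<delta> = u2 $ i - u1 $ i"
  have dp: "\<delta> > 0" using assms(3) by (simp add: \<delta>_def)
  obtain k :: nat where k: "max (norm u1) (max (norm u2) (2 / \<delta>)) < real k"
    using reals_Archimedean2 by blast
  have k1: "norm u1 \<le> k" "norm u2 \<le> k" "2 / \<delta> < k" using k by auto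
  have kp: "(0::real) < real k + 1" by simp
  have "2 < real k * \<delta>" using k1(3) dp by (simp add: divide_less_eq mult.commute)
  then have k2: "2 < (real k + 1) * \<delta>" using dp by (simp add: algebra_simps)
  define m where "m = \<lfloor>(real k + 1) * u1 $ i\<rfloor> + 1"
  have m1: "(real k + 1) * u1 $ i < m" unfolding m_def by linarith
  have m2: "real_of_int m \<le> (real k + 1) * u1 $ i + 1" unfolding m_def by linarith
  have a: "u1 $ i < m / (real k + 1)" using m1 kp by (simp add: less_divide_eq mult.commute)
  have "real_of_int m + 1 < (real k + 1) * u2 $ i"
    using m2 k2 by (simp add: \<delta>_def algebra_simps)
  then have b: "(real_of_int m + 1) / (real k + 1) < u2 $ i" using kp by (simp add: divide_less_eq mult.commute)
  show ?thesis unfolding Aset_def using assms(1,2) a b k1 by auto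
qed

lemma cover:
  fixes X :: "real^'d^'n"
  assumes inj: "inj ((*v) X)" and b: "b1 \<in> argmin_set (Qobj X p y) B" "b2 \<in> argmin_set (Qobj X p y) B"
    and ne: "b1 \<noteq> b2"
  shows "y \<in> (\<Union>x. Aset X p B x)"
proof -
  let ?u1 = "X *v b1" and ?u2 = "X *v b2"
  have m: "?u1 \<in> Mset X p B y" "?u2 \<in> Mset X p B y" using b by (auto simp: Mset_def)
  have "?u1 \<noteq> ?u2" using inj ne by (auto dest: injD)
  then obtain i where i: "?u1 $ i \<noteq> ?u2 $ i" by (auto simp: vec_eq_iff)
  show ?thesis
  proof (cases "?u1 $ i < ?u2 $ i")
    case True
    then show ?thesis using cover_aux[OF m(1) m(2) True] by blast
  next
    case False
    then have "?u2 $ i < ?u1 $ i" using i by linarith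
    then show ?thesis using cover_aux[OF m(2) m(1)] by blast
  qed
qed

theorem theorem2:
  fixes X :: "real^'d^'n"
    and Bs :: "nat \<Rightarrow> (real^'d) set" and J :: nat
    and p :: "real^'d \<Rightarrow> real"
    and P :: "'w measure" and Y :: "'w \<Rightarrow> real^'n"
  assumes "disjoint_family_on Bs {..<J}"
    and "\<And>j. j < J \<Longrightarrow> manifold_with_corners (Bs j)"
    and "\<And>j. j < J \<Longrightarrow> continuous_on (Bs j) p"
    and "rank X = CARD('d)"
    and "prob_space P"
    and "Y \<in> borel_measurable P"
    and "absolutely_continuous lborel (distr P borel Y)"
  shows "AE \<omega> in P. \<forall>\<beta>1\<in>argmin_set (Qobj X p (Y \<omega>)) (\<Union>j<J. Bs j).
                     \<forall>\<beta>2\<in>argmin_set (Qobj X p (Y \<omega>)) (\<Union>j<J. Bs j). \<beta>1 = \<beta>2"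
proof -
  let ?B = "\<Union>j<J. Bs j"
  define N where "N = (\<Union>x. Aset X p ?B x)"
  have inj: "inj ((*v) X)" using assms(4) full_rank_injective by blast
  have cnt: "countable (range (Aset X p ?B))" by simp
  have "negligible N" unfolding N_def
    by (rule negligible_countable_Union[OF cnt]) (auto intro: Aset_negligible)
  then have "N \<in> null_sets lebesgue" by (simp add: negligible_iff_null_sets)
  then have "AE x in lebesgue. x \<notin> N" by (rule AE_not_in)
  then have "AE x in lborel. x \<notin> N" by (simp add: AE_completion_iff)
  then obtain N' where N': "{x \<in> space lborel. \<not> x \<notin> N} \<subseteq> N'" "emeasure lborel N' = 0" "N' \<in> sets lborel"
    by (rule AE_E)
  have "N' \<in> null_sets (distr P borel Y)"
    proof -
    have "N' \<in> null_sets lborel" using N'(2,3) by (simp add: null_sets_def)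
    then show ?thesis using assms(7) unfolding absolutely_continuous_def by blast
  qed
  then have "emeasure (distr P borel Y) N' = 0" "N' \<in> sets borel" by auto
  then have nul: "Y -` N' \<inter> space P \<in> null_sets P"
    using assms(6) by (auto simp: emeasure_distr null_sets_def intro: measurable_sets)
  show ?thesis
  proof (rule AE_I'[OF nul], rule subsetI)
    fix \<omega> assume w: "\<omega> \<in> {\<omega> \<in> space P. \<not> (\<forall>\<beta>1\<in>argmin_set (Qobj X p (Y \<omega>)) ?B.
                     \<forall>\<beta>2\<in>argmin_set (Qobj X p (Y \<omega>)) ?B. \<beta>1 = \<beta>2)}"
    then obtain b1 b2 where bb: "b1 \<in> argmin_set (Qobj X p (Y \<omega>)) ?B"
      "b2 \<in> argmin_set (Qobj X p (Y \<omega>)) ?B" "b1 \<noteq> b2" by blast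
    have "Y \<omega> \<in> N" unfolding N_def using cover[OF inj bb] .
    then show "\<omega> \<in> Y -` N' \<inter> space P" using N'(1) w by auto
  qed
qed
end
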